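(* Let $d\ge1$ and let $x_1,\dots,x_t$ be positive integers such that no value occurs more than $d$ times among them. Then $\prod_{i=1}^t x_i\ge\big(\frac{t}{ed}\big)^t$. *)

theory Defs
  imports Complex_Main
begin

end

theory Submission
  imports Defs
begin

lemma suc_pow_le: "real (Suc k) ^ k \<le> exp 1 * real k ^ k"
proof (cases "k = 0")
  case True then show ?thesis by simp
next
  case False
  have "1 + 1 / real k \<le> exp (1 / real k)" using exp_ge_add_one_self by simp
  hence "(1 + 1 / real k) ^ k \<le> exp (1 / real k) ^ k"
    by (intro power_mono) (auto simp: add_nonneg_nonneg)
  also have "\<dots> = exp 1" using False by (simp add: exp_of_nat_mult[symmetric])
  finally have h: "(1 + 1 / real k) ^ k \<le> exp 1" .
  have "real (Suc k) = (1 + 1 / real k) * real k" using False by (simp add: field_simps)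
  hence "real (Suc k) ^ k = (1 + 1 / real k) ^ k * real k ^ k" by (simp add: power_mult_distrib)
  also have "\<dots> \<le> exp 1 * real k ^ k" using h by (intro mult_right_mono) auto
  finally show ?thesis .
qed

lemma step_ineq:
  assumes "d \<ge> (1::nat)"
  shows "(real (Suc k) / (exp 1 * real d)) ^ Suc k \<le> (real (Suc k) / real d) * (real k / (exp 1 * real d)) ^ k"
proof -
  have pos: "exp 1 * real d > 0" using assms by simp
  have "(real (Suc k) / (exp 1 * real d)) ^ Suc k
      = real (Suc k) / (exp 1 * real d) * (real (Suc k) ^ k / (exp 1 * real d) ^ k)"
    by (simp add: power_divide)
  also have "\<dots> \<le> real (Suc k) / (exp 1 * real d) * (exp 1 * real k ^ k / (exp 1 * real d) ^ k)"
    using pos suc_pow_le[of k] by (intro mult_left_mono divide_right_mono) auto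
  also have "\<dots> = (real (Suc k) / real d) * (real k / (exp 1 * real d)) ^ k"
    using pos assms by (simp add: power_divide power_mult_distrib field_simps)
  finally show ?thesis .
qed

lemma main_gen:
  fixes x :: "nat \<Rightarrow> nat" and t d :: nat
  assumes "d \<ge> 1"
    and "\<forall>i\<in>{1..t}. x i > 0"
    and "\<forall>v. card {i\<in>{1..t}. x i = v} \<le> d"
  shows "S \<subseteq> {1..t} \<Longrightarrow> card S = n \<Longrightarrow> (\<Prod>i\<in>S. real (x i)) \<ge> (real n / (exp 1 * real d)) ^ n"
proof (induction n arbitrary: S)
  case 0
  then have "S = {}" using finite_subset[OF 0(1)] by auto
  then show ?case by simp
next
  case (Suc k)
  have fin: "finite S" using finite_subset[OF Suc.prems(1)] by simp
  have ne: "S \<noteq> {}" using Suc.prems(2) by auto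
  define m where "m = Max (x ` S)"
  have "m \<in> x ` S" unfolding m_def using fin ne by simp
  then obtain j where j: "j \<in> S" "x j = m" by auto
  have le: "\<And>i. i \<in> S \<Longrightarrow> x i \<le> m" unfolding m_def using fin by simp
  have S_sub: "S \<subseteq> (\<Union>v\<in>{1..m}. {i\<in>S. x i = v})"
    using le assms(2) Suc.prems(1) by fastforce
  have "card S \<le> card (\<Union>v\<in>{1..m}. {i\<in>S. x i = v})"
    by (rule card_mono[OF _ S_sub]) (use fin in auto)
  also have "\<dots> \<le> (\<Sum>v\<in>{1..m}. card {i\<in>S. x i = v})" by (rule card_UN_le) simp
  also have "\<dots> \<le> (\<Sum>v\<in>{1..m}. d)"
  proof (rule sum_mono)
    fix v
    have "card {i\<in>S. x i = v} \<le> card {i\<in>{1..t}. x i = v}"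
      by (rule card_mono) (use Suc.prems(1) in auto)
    then show "card {i\<in>S. x i = v} \<le> d" using assms(3) by (meson order_trans)
  qed
  finally have md: "Suc k \<le> m * d" using Suc.prems(2) by simp
  have IH: "(real k / (exp 1 * real d)) ^ k \<le> (\<Prod>i\<in>S - {j}. real (x i))"
    using Suc.IH[of "S - {j}"] Suc.prems j fin by auto
  have "(\<Prod>i\<in>S. real (x i)) = real m * (\<Prod>i\<in>S - {j}. real (x i))"
    using j fin by (simp add: prod.remove)
  also have "\<dots> \<ge> (real (Suc k) / real d) * (real k / (exp 1 * real d)) ^ k"
  proof (rule mult_mono)
    have "real (Suc k) \<le> real m * real d" using md by (metis of_nat_le_iff of_nat_mult)
    then show "real (Suc k) / real d \<le> real m" using assms(1) by (simp add: divide_le_eq)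
  qed (use IH in auto)
  finally show ?case using step_ineq[OF assms(1), of k] by linarith
qed

theorem proposition7p2:
  fixes x :: "nat \<Rightarrow> nat" and t d :: nat
  assumes "d \<ge> 1"
    and "\<forall>i\<in>{1..t}. x i > 0"
    and "\<forall>v. card {i\<in>{1..t}. x i = v} \<le> d"
  shows "(\<Prod>i=1..t. real (x i)) \<ge> (real t / (exp 1 * real d)) ^ t"
  using main_gen[OF assms, of "{1..t}" t] by simp

end
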